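(* Let $F$ be an infinite field of prime characteristic $p$, and let $q,k$ be positive integers and $n\geqslant qk$. Let $E_n$ be the natural $n$-dimensional module for $\mathrm{GL}_n(F)$ with standard basis $e_1,\dots,e_n$. Then the $\omega_{qk}$-weight space of the $F\mathrm{GL}_n(F)$-module $L^k(E_n^{\otimes q})$ has dimension $$\dim f_{qk}\bigl(L^k(E_n^{\otimes q})\bigr) = \frac{(qk)!}{k}.$$
   Context: All tensor products are over $F$, and $\mathrm{GL}_n(F)$ acts diagonally on tensor powers. For an $F$-vector space (module) $W$, $L^k(W)$ denotes the $k$th Lie power: the intersection with $W^{\otimes k}$ of the Lie subalgebra of the tensor algebra $T(W)$ (bracket $[x,y]=x\otimes y-y\otimes x$) generated by $W$. Here $W=E_n^{\otimes q}$, so $L^k(E_n^{\otimes q})$ is a $\mathrm{GL}_n(F)$-submodule of $E_n^{\otimes qk}$. For $t_1,\dots,t_n\in F^\times$ let $d(t_1,\dots,t_n)$ be the diagonal matrix with these entries. For a polynomial $\mathrm{GL}_n(F)$-module $M$ homogeneous of degree $r$ and $\alpha=(\alpha_1,\dots,\alpha_n)$ a tuple of non-negative integers summing to $r$, the weight space is $M^\alpha=\{u\in M : u\cdot d(t_1,\dots,t_n)=t_1^{\alpha_1}\cdots t_n^{\alpha_n}u \ \forall t_i\in F^\times\}$. For $r\le n$, $\omega_r=(1,\dots,1,0,\dots,0)$ with $r$ ones, and the Schur functor is $f_r(M)=M^{\omega_r}$. *)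

theory Defs
  imports Complex_Main "HOL-Computational_Algebra.Primes" "HOL-Library.Function_Algebras"
begin

text \<open>Tensors over E_n (basis e_0,...,e_{n-1}, i.e. e_{i+1} of the paper is index i)
 are represented by coefficient functions on words (lists of indices).
 The word [i_1,...,i_m] stands for the basis tensor e_{i_1} (x) ... (x) e_{i_m}.\<close>

definition tensor_space :: "nat \<Rightarrow> nat \<Rightarrow> (nat list \<Rightarrow> 'a::field) set" where
  "tensor_space n m = {u. \<forall>w. u w \<noteq> 0 \<longrightarrow> length w = m \<and> set w \<subseteq> {..<n}}"

text \<open>Multiplication of the tensor algebra T(E_n): concatenation convolution.\<close>
definition tmult :: "(nat list \<Rightarrow> 'a::field) \<Rightarrow> (nat list \<Rightarrow> 'a) \<Rightarrow> (nat list \<Rightarrow> 'a)" where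
  "tmult u v = (\<lambda>w. \<Sum>i\<le>length w. u (take i w) * v (drop i w))"

definition lie_bracket :: "(nat list \<Rightarrow> 'a::field) \<Rightarrow> (nat list \<Rightarrow> 'a) \<Rightarrow> (nat list \<Rightarrow> 'a)" where
  "lie_bracket u v = (\<lambda>w. tmult u v w - tmult v u w)"

inductive_set lie_gen :: "nat \<Rightarrow> nat \<Rightarrow> (nat list \<Rightarrow> 'a::field) set" for n q where
  gen: "x \<in> tensor_space n q \<Longrightarrow> x \<in> lie_gen n q"
| add: "x \<in> lie_gen n q \<Longrightarrow> y \<in> lie_gen n q \<Longrightarrow> (\<lambda>w. x w + y w) \<in> lie_gen n q"
| smult: "x \<in> lie_gen n q \<Longrightarrow> (\<lambda>w. c * x w) \<in> lie_gen n q"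
| brk: "x \<in> lie_gen n q \<Longrightarrow> y \<in> lie_gen n q \<Longrightarrow> lie_bracket x y \<in> lie_gen n q"

definition lie_power :: "nat \<Rightarrow> nat \<Rightarrow> nat \<Rightarrow> (nat list \<Rightarrow> 'a::field) set" where
  "lie_power n q k = lie_gen n q \<inter> tensor_space n (q * k)"

text \<open>Right action of the diagonal matrix d(t_0,...,t_{n-1}) on tensors (diagonal action).\<close>
definition act_diag :: "(nat \<Rightarrow> 'a::field) \<Rightarrow> (nat list \<Rightarrow> 'a) \<Rightarrow> (nat list \<Rightarrow> 'a)" where
  "act_diag t u = (\<lambda>w. prod_list (map t w) * u w)"

definition weight_space :: "nat \<Rightarrow> (nat list \<Rightarrow> 'a::field) set \<Rightarrow> (nat \<Rightarrow> nat) \<Rightarrow> (nat list \<Rightarrow> 'a) set" where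
  "weight_space n M \<alpha> = {u \<in> M. \<forall>t. (\<forall>i<n. t i \<noteq> 0) \<longrightarrow>
      act_diag t u = (\<lambda>w. (\<Prod>i<n. t i ^ \<alpha> i) * u w)}"

definition omega :: "nat \<Rightarrow> nat \<Rightarrow> nat" where
  "omega r = (\<lambda>i. if i < r then 1 else 0)"

definition schur_functor :: "nat \<Rightarrow> nat \<Rightarrow> (nat list \<Rightarrow> 'a::field) set \<Rightarrow> (nat list \<Rightarrow> 'a) set" where
  "schur_functor n r M = weight_space n M (omega r)"

definition tdim :: "(nat list \<Rightarrow> 'a::field) set \<Rightarrow> nat" where
  "tdim S = vector_space.dim (\<lambda>(c::'a) u. (\<lambda>w. c * u w)) S"

end

theory Submission imports Defs "HOL-Computational_Algebra.Polynomial" "HOL-Combinatorics.Multiset_Permutations" begin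

interpretation V: vector_space "\<lambda>(c::'a::field) (u::'b \<Rightarrow> 'a) w. c * u w"
  by unfold_locales (auto simp: fun_eq_iff algebra_simps)

definition hom :: "nat \<Rightarrow> (nat list \<Rightarrow> 'a::field) \<Rightarrow> bool" where
  "hom a u \<longleftrightarrow> (\<forall>w. u w \<noteq> 0 \<longrightarrow> length w = a)"

definition H :: "(nat list \<Rightarrow> 'a::field) \<Rightarrow> bool" where
  "H u \<longleftrightarrow> (\<exists>a. hom a u)"

definition msupp :: "nat multiset \<Rightarrow> (nat list \<Rightarrow> 'a::field) \<Rightarrow> bool" where
  "msupp M u \<longleftrightarrow> (\<forall>w. u w \<noteq> 0 \<longrightarrow> mset w = M)"

abbreviation br where "br \<equiv> lie_bracket"

lemma tmult_hom:
  assumes "hom a u" "hom b v"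
  shows "tmult u v w = (if length w = a + b then u (take a w) * v (drop a w) else 0)"
proof (cases "length w = a + b")
  case True
  have "tmult u v w = (\<Sum>i\<le>length w. if i = a then u (take a w) * v (drop a w) else 0)"
    unfolding tmult_def
  proof (rule sum.cong[OF refl])
    fix i assume i: "i \<in> {..length w}"
    show "u (take i w) * v (drop i w) = (if i = a then u (take a w) * v (drop a w) else 0)"
    proof (cases "i = a")
      case False
      have "u (take i w) = 0"
      proof (rule ccontr)
        assume "u (take i w) \<noteq> 0"
        then have "length (take i w) = a" using assms(1) unfolding hom_def by blast
        then show False using i False by auto
      qed
      then show ?thesis using False by simp
    qed simp
  qed
  also have "\<dots> = u (take a w) * v (drop a w)" using True by (simp add: sum.delta)
  finally show ?thesis using True by simp
next
  case False
  have "tmult u v w = (\<Sum>i\<le>length w. 0)"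
    unfolding tmult_def
  proof (rule sum.cong[OF refl])
    fix i assume i: "i \<in> {..length w}"
    show "u (take i w) * v (drop i w) = 0"
    proof (rule ccontr)
      assume "u (take i w) * v (drop i w) \<noteq> 0"
      then have "length (take i w) = a" "length (drop i w) = b"
        using assms unfolding hom_def by auto
      then show False using False i by auto
    qed
  qed
  then show ?thesis using False by simp
qed

lemma hom_tmult: "hom a u \<Longrightarrow> hom b v \<Longrightarrow> hom (a + b) (tmult u v)"
  by (simp add: hom_def tmult_hom[of a u b v])

lemma hom_br: "hom a u \<Longrightarrow> hom b v \<Longrightarrow> hom (a + b) (br u v)"
  by (auto simp add: hom_def lie_bracket_def tmult_hom[of a u b v] tmult_hom[of b v a u])

lemma H_br: "H u \<Longrightarrow> H v \<Longrightarrow> H (br u v)"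
  unfolding H_def using hom_br by blast

lemma tmult_assoc:
  assumes "hom a u" "hom b v" "hom c z"
  shows "tmult (tmult u v) z = tmult u (tmult v z)"
proof -
  have 1: "hom (a+b) (tmult u v)" "hom (b+c) (tmult v z)" using assms hom_tmult by blast+
  show ?thesis
    by (rule ext) (simp add: tmult_hom[OF 1(1) assms(3)] tmult_hom[OF assms(1) 1(2)]
        tmult_hom[OF assms(1,2)] tmult_hom[OF assms(2,3)] drop_take add.commute)
qed

lemma tmult_add1: "tmult (x + y) z = tmult x z + tmult y z"
  by (simp add: tmult_def fun_eq_iff algebra_simps sum.distrib)
lemma tmult_add2: "tmult z (x + y) = tmult z x + tmult z y"
  by (simp add: tmult_def fun_eq_iff algebra_simps sum.distrib)
lemma tmult_diff1: "tmult (x - y) z = tmult x z - tmult y z"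
  by (simp add: tmult_def fun_eq_iff algebra_simps sum_subtractf)
lemma tmult_diff2: "tmult z (x - y) = tmult z x - tmult z y"
  by (simp add: tmult_def fun_eq_iff algebra_simps sum_subtractf)
lemma tmult_sc1: "tmult (\<lambda>w. c * x w) z = (\<lambda>w. c * tmult x z w)"
  by (simp add: tmult_def fun_eq_iff algebra_simps sum_distrib_left)
lemma tmult_sc2: "tmult z (\<lambda>w. c * x w) = (\<lambda>w. c * tmult z x w)"
  by (simp add: tmult_def fun_eq_iff algebra_simps sum_distrib_left)

lemma br_eq: "br u v = tmult u v - tmult v u"
  by (simp add: lie_bracket_def fun_eq_iff)

lemma br_add1: "br (x + y) z = br x z + br y z"
  by (simp add: br_eq tmult_add1 tmult_add2)
lemma br_add2: "br z (x + y) = br z x + br z y"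
  by (simp add: br_eq tmult_add1 tmult_add2)
lemma br_sc1: "br (\<lambda>w. c * x w) z = (\<lambda>w. c * br x z w)"
  by (simp add: lie_bracket_def tmult_sc1 tmult_sc2 algebra_simps)
lemma br_sc2: "br z (\<lambda>w. c * x w) = (\<lambda>w. c * br z x w)"
  by (simp add: lie_bracket_def tmult_sc1 tmult_sc2 algebra_simps)
lemma br_neg1: "br (- x) z = - br x z"
  by (simp add: lie_bracket_def tmult_def fun_eq_iff sum_negf)
lemma br_anti: "br y x = - br x y"
  by (simp add: lie_bracket_def fun_eq_iff)


lemma jacobi:
  assumes "H x" "H y" "H z"
  shows "br x (br y z) = br (br x y) z - br (br x z) y"
proof -
  obtain a b c where h: "hom a x" "hom b y" "hom c z" using assms H_def by blast
  note A = tmult_assoc[OF h(1,2,3)] tmult_assoc[OF h(1,3,2)]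
      tmult_assoc[OF h(2,1,3)] tmult_assoc[OF h(2,3,1)] tmult_assoc[OF h(3,1,2)] tmult_assoc[OF h(3,2,1)]
  show ?thesis
    unfolding br_eq tmult_diff1 tmult_diff2 A by (simp add: algebra_simps)
qed


lemma span_lin:
  assumes add: "\<And>x y. f (x + y) = f x + f y"
    and sc: "\<And>c x. f (\<lambda>w. c * x w) = (\<lambda>w. c * f x w)"
    and img: "\<And>x. x \<in> S \<Longrightarrow> f x \<in> V.span T"
    and x: "x \<in> V.span S"
  shows "f x \<in> V.span T"
proof -
  have "V.subspace {x. f x \<in> V.span T}"
  proof (rule V.subspaceI)
    have "f 0 = f 0 + f 0" using add[of 0 0] by simp
    then have "f 0 = 0" by simp
    then show "0 \<in> {x. f x \<in> V.span T}" by (simp add: V.span_zero)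
  next
    fix x y assume "x \<in> {x. f x \<in> V.span T}" "y \<in> {x. f x \<in> V.span T}"
    then show "x + y \<in> {x. f x \<in> V.span T}" by (simp add: add V.span_add)
  next
    fix c x assume "x \<in> {x. f x \<in> V.span T}"
    then show "(\<lambda>w. c * x w) \<in> {x. f x \<in> V.span T}" by (simp add: sc V.span_scale)
  qed
  then show ?thesis using V.span_induct[OF x, of "\<lambda>x. f x \<in> V.span T"] img by auto
qed

lemma foldl_add: "foldl br (x + y) rs = foldl br x rs + foldl br y rs"
  by (induct rs arbitrary: x y) (simp_all add: br_add1)
lemma foldl_sc: "foldl br (\<lambda>w. c * x w) rs = (\<lambda>w. c * foldl br x rs w)"
  by (induct rs arbitrary: x) (simp_all add: br_sc1)

definition delta :: "nat list \<Rightarrow> nat list \<Rightarrow> 'a::field" where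
  "delta v = (\<lambda>w. if w = v then 1 else 0)"

lemma H_delta: "H (delta v)"
  unfolding H_def hom_def delta_def by (rule exI[of _ "length v"]) auto

lemma H_foldl: "H x \<Longrightarrow> \<forall>y\<in>set ys. H y \<Longrightarrow> H (foldl br x ys)"
  by (induct ys arbitrary: x) (auto intro: H_br)

definition Wd :: "nat \<Rightarrow> nat \<Rightarrow> nat list set" where
  "Wd n q = {v. length v = q \<and> set v \<subseteq> {..<n}}"

definition LN :: "nat \<Rightarrow> nat \<Rightarrow> (nat list \<Rightarrow> 'a::field) set" where
  "LN n q = {foldl br (delta v) (map delta us) | v us. v \<in> Wd n q \<and> set us \<subseteq> Wd n q}"

lemma H_LN: "P \<in> LN n q \<Longrightarrow> H P"
  unfolding LN_def by (auto intro!: H_foldl H_delta)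

lemma LN_snoc: "P \<in> LN n q \<Longrightarrow> y \<in> Wd n q \<Longrightarrow> br P (delta y) \<in> LN n q"
  unfolding LN_def
proof clarify
  fix v us assume "v \<in> Wd n q" "set us \<subseteq> Wd n q" "y \<in> Wd n q"
  then show "\<exists>va usa. br (foldl br (delta v) (map delta us)) (delta y) = foldl br (delta va) (map delta usa) \<and>
          va \<in> Wd n q \<and> set usa \<subseteq> Wd n q"
    by (intro exI[of _ v] exI[of _ "us @ [y]"]) simp
qed

lemma LN_br:
  assumes "set ys \<subseteq> Wd n q" "a \<in> Wd n q"
  fixes P :: "nat list \<Rightarrow> 'a::field"
  shows "P \<in> LN n q \<Longrightarrow> br P (foldl br (delta a) (map delta ys)) \<in> V.span (LN n q)"
  using assms(1)
proof (induct ys arbitrary: P rule: rev_induct)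
  case Nil
  then show ?case using LN_snoc[OF Nil(1) assms(2)] by (simp add: V.span_base)
next
  case (snoc y ys)
  define Q :: "nat list \<Rightarrow> 'a" where "Q = foldl br (delta a) (map delta ys)"
  have HQ: "H Q" unfolding Q_def by (auto intro!: H_foldl H_delta)
  have y: "y \<in> Wd n q" using snoc by auto
  have "br P (foldl br (delta a) (map delta (ys @ [y]))) = br P (br Q (delta y))"
    by (simp add: Q_def)
  also have "\<dots> = br (br P Q) (delta y) - br (br P (delta y)) Q"
    by (rule jacobi[OF H_LN[OF snoc(2)] HQ H_delta])
  also have "\<dots> \<in> V.span (LN n q)"
  proof (rule V.span_diff)
    have bPQ: "br P Q \<in> V.span (LN n q)" using snoc unfolding Q_def by auto
    show "br (br P Q) (delta y) \<in> V.span (LN n q)"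
      by (rule span_lin[of "\<lambda>z. br z (delta y)", OF _ _ _ bPQ])
         (auto simp: br_add1 br_sc1 intro!: V.span_base LN_snoc[OF _ y])
    show "br (br P (delta y)) Q \<in> V.span (LN n q)"
      using snoc(1)[OF LN_snoc[OF snoc(2) y]] snoc(3) unfolding Q_def by auto
  qed
  finally show ?case .
qed

lemma LN_br2:
  assumes x: "x \<in> V.span (LN n q)" and y: "y \<in> V.span (LN n q)"
  shows "br x y \<in> V.span (LN n q)"
proof -
  have 1: "br x Q \<in> V.span (LN n q)" if "Q \<in> LN n q" for Q
  proof -
    from that obtain a ys where Q: "Q = foldl br (delta a) (map delta ys)" "a \<in> Wd n q" "set ys \<subseteq> Wd n q"
      unfolding LN_def by blast
    show ?thesis
      by (rule span_lin[of "\<lambda>z. br z Q", OF _ _ _ x]) (auto simp: br_add1 br_sc1 Q intro: LN_br[OF Q(3) Q(2)])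
  qed
  show ?thesis
    by (rule span_lin[of "\<lambda>z. br x z", OF _ _ _ y]) (auto simp: br_add2 br_sc2 intro: 1)
qed

lemma sum_fun_apply: "(sum f A) w = sum (\<lambda>a. f a w) A"
  by (induct A rule: infinite_finite_induct) auto

lemma lie_gen_span: "x \<in> lie_gen n q \<Longrightarrow> x \<in> V.span (LN n q)"
proof (induct rule: lie_gen.induct)
  case (gen x)
  have fin: "finite (Wd n q)"
    unfolding Wd_def using finite_lists_length_eq[of "{..<n}" q] by (simp add: conj_commute)
  have "x = (\<Sum>v\<in>Wd n q. (\<lambda>w. x v * delta v w))"
  proof (rule ext)
    fix w
    have "(\<Sum>v\<in>Wd n q. (\<lambda>w. x v * delta v w)) w = (\<Sum>v\<in>Wd n q. x v * (if w = v then 1 else 0))"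
      by (simp add: sum_fun_apply delta_def)
    also have "\<dots> = (\<Sum>v\<in>Wd n q. if w = v then x v else 0)"
      by (rule sum.cong) auto
    also have "\<dots> = (if w \<in> Wd n q then x w else 0)"
      by (simp add: sum.delta fin)
    also have "\<dots> = x w" using gen unfolding tensor_space_def Wd_def by auto
    finally show "x w = (\<Sum>v\<in>Wd n q. (\<lambda>w. x v * delta v w)) w" by simp
  qed
  also have "\<dots> \<in> V.span (LN n q)"
  proof (rule V.span_sum)
    fix v assume "v \<in> Wd n q"
    then have "delta v \<in> LN n q" unfolding LN_def by (intro CollectI exI[of _ v] exI[of _ "[]"]) simp
    then show "(\<lambda>w. x v * delta v w) \<in> V.span (LN n q)" by (intro V.span_scale V.span_base)
  qed
  finally show ?case .
next
  case (add x y)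
  then show ?case using V.span_add[of x _ y] by (simp add: plus_fun_def)
next
  case (smult x c)
  then show ?case using V.span_scale by blast
next
  case (brk x y)
  then show ?case using LN_br2 by blast
qed


lemma foldl_neg: "foldl br (- x) rs = - foldl br x rs"
  by (induct rs arbitrary: x) (simp_all add: br_neg1)

lemma lnT:
  fixes x :: "nat list \<Rightarrow> 'a::field"
  assumes "ys \<noteq> []" "H x" "\<forall>z\<in>set zs. H z" "\<forall>y\<in>set ys. H y"
  shows "br (foldl br x zs) (foldl br (hd ys) (tl ys))
           \<in> V.span {foldl br x (zs @ \<pi>) | \<pi>. mset \<pi> = mset ys}"
  using assms(1,3,4)
proof (induct ys arbitrary: zs rule: rev_induct)
  case Nil
  then show ?case by simp
next
  case (snoc y ys)
  show ?case
  proof (cases "ys = []")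
    case True
    then show ?thesis
      by (intro V.span_base CollectI exI[of _ "[y]"]) simp
  next
    case False
    define P :: "nat list \<Rightarrow> 'a" where "P = foldl br (hd ys) (tl ys)"
    define X :: "nat list \<Rightarrow> 'a" where "X = foldl br x zs"
    have HX: "H X" unfolding X_def using assms(2) snoc by (auto intro: H_foldl)
    have HP: "H P" unfolding P_def using snoc False by (cases ys) (auto intro: H_foldl)
    have Hy: "H y" using snoc by auto
    have eq: "foldl br (hd (ys @ [y])) (tl (ys @ [y])) = br P y"
      using False unfolding P_def by (cases ys) auto
    let ?T = "{foldl br x (zs @ \<pi>) | \<pi>. mset \<pi> = mset (ys @ [y])}"
    have "br X (br P y) = br (br X P) y - br (br X y) P" by (rule jacobi[OF HX HP Hy])
    also have "\<dots> \<in> V.span ?T"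
    proof (rule V.span_diff)
      have 1: "br X P \<in> V.span {foldl br x (zs @ \<pi>) | \<pi>. mset \<pi> = mset ys}"
        using snoc(1)[OF False] snoc(3,4) unfolding X_def P_def by auto
      show "br (br X P) y \<in> V.span ?T"
      proof (rule span_lin[of "\<lambda>z. br z y", OF _ _ _ 1])
        fix u assume "u \<in> {foldl br x (zs @ \<pi>) | \<pi>. mset \<pi> = mset ys}"
        then obtain \<pi> where "u = foldl br x (zs @ \<pi>)" "mset \<pi> = mset ys" by blast
        then show "br u y \<in> V.span ?T"
          by (intro V.span_base CollectI exI[of _ "\<pi> @ [y]"]) simp
      qed (auto simp: br_add1 br_sc1)
      have 2: "br (foldl br x (zs @ [y])) P \<in> V.span {foldl br x ((zs @ [y]) @ \<pi>) | \<pi>. mset \<pi> = mset ys}"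
        using snoc(1)[OF False, of "zs @ [y]"] snoc(3,4) unfolding P_def by auto
      have 3: "{foldl br x ((zs @ [y]) @ \<pi>) | \<pi>. mset \<pi> = mset ys} \<subseteq> ?T"
      proof clarify
        fix \<pi> :: "(nat list \<Rightarrow> 'a) list" assume "mset \<pi> = mset ys"
        then show "\<exists>\<pi>'. foldl br x ((zs @ [y]) @ \<pi>) = foldl br x (zs @ \<pi>') \<and> mset \<pi>' = mset (ys @ [y])"
          by (intro exI[of _ "y # \<pi>"]) simp
      qed
      show "br (br X y) P \<in> V.span ?T"
        using V.span_mono[OF 3] 2 unfolding X_def by auto
    qed
    finally show ?thesis unfolding X_def eq .
  qed
qed

lemma lnR:
  fixes x :: "nat list \<Rightarrow> 'a::field"
  assumes "x \<in> set L" "\<forall>y\<in>set L. H y"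
  shows "foldl br (hd L) (tl L) \<in> V.span {foldl br x \<pi> | \<pi>. mset (x # \<pi>) = mset L}"
proof -
  obtain ys rs where L: "L = ys @ x # rs" using split_list[OF assms(1)] by blast
  show ?thesis
  proof (cases "ys = []")
    case True
    then show ?thesis unfolding L by (intro V.span_base CollectI exI[of _ rs]) simp
  next
    case False
    define P :: "nat list \<Rightarrow> 'a" where "P = foldl br (hd ys) (tl ys)"
    have eq: "foldl br (hd L) (tl L) = - foldl br (br x P) rs"
      using False unfolding L P_def by (cases ys) (auto simp: br_anti[of x] foldl_neg)
    have 1: "br (foldl br x []) P \<in> V.span {foldl br x ([] @ \<pi>) | \<pi>. mset \<pi> = mset ys}"
      unfolding P_def by (rule lnT[OF False]) (use assms(2) L in auto)
    have "foldl br (br x P) rs \<in> V.span {foldl br x \<pi> | \<pi>. mset (x # \<pi>) = mset L}"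
    proof (rule span_lin[of "\<lambda>z. foldl br z rs", OF _ _ _ 1[simplified]])
      fix u assume "u \<in> {foldl br x \<pi> | \<pi>. mset \<pi> = mset ys}"
      then obtain \<pi> where "u = foldl br x \<pi>" "mset \<pi> = mset ys" by blast
      then show "foldl br u rs \<in> V.span {foldl br x \<pi> | \<pi>. mset (x # \<pi>) = mset L}"
        unfolding L by (intro V.span_base CollectI exI[of _ "\<pi> @ rs"]) simp
    qed (auto simp: foldl_add foldl_sc)
    then show ?thesis unfolding eq by (rule V.span_neg)
  qed
qed


lemma msupp_hom: "msupp M u \<Longrightarrow> hom (size M) u"
  unfolding msupp_def hom_def by auto

lemma msupp_delta: "msupp (mset v) (delta v)"
  unfolding msupp_def delta_def by auto

lemma msupp_tmult:
  assumes "msupp A u" "msupp B v"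
  shows "msupp (A + B) (tmult u v)"
  unfolding msupp_def
proof (intro allI impI)
  fix w assume "tmult u v w \<noteq> 0"
  then obtain i where "u (take i w) * v (drop i w) \<noteq> 0"
    unfolding tmult_def using sum.not_neutral_contains_not_neutral by blast
  then have "mset (take i w) = A" "mset (drop i w) = B" using assms unfolding msupp_def by auto
  then show "mset w = A + B" using mset_append[of "take i w" "drop i w"] by simp
qed

lemma msupp_br: "msupp A u \<Longrightarrow> msupp B v \<Longrightarrow> msupp (A + B) (br u v)"
proof -
  assume a: "msupp A u" "msupp B v"
  have 1: "msupp (A + B) (tmult u v)" "msupp (B + A) (tmult v u)"
    using msupp_tmult[OF a] msupp_tmult[OF a(2,1)] by auto
  show ?thesis unfolding msupp_def lie_bracket_def
  proof (intro allI impI)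
    fix w assume "tmult u v w - tmult v u w \<noteq> 0"
    then have "tmult u v w \<noteq> 0 \<or> tmult v u w \<noteq> 0" by auto
    then show "mset w = A + B" using 1 unfolding msupp_def by (auto simp: add.commute)
  qed
qed

lemma msupp_foldl: "msupp M x \<Longrightarrow> msupp (M + mset (concat us)) (foldl br x (map delta us))"
proof (induct us arbitrary: M x)
  case (Cons u us)
  have "msupp (M + mset u) (br x (delta u))" by (rule msupp_br[OF Cons(2) msupp_delta])
  from Cons(1)[OF this] show ?case by (simp add: add.assoc)
qed simp

lemma msupp_LN: "msupp (mset (concat (v # us))) (foldl br (delta v) (map delta us))"
  using msupp_foldl[OF msupp_delta, of v us] by simp

lemma length_concat_q: "\<forall>v\<in>set vs. length v = q \<Longrightarrow> length (concat vs) = q * length vs"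
  by (induct vs) auto

lemma br_hom_eval:
  assumes "hom a u" "hom b z"
  shows "br u z w = (if length w = a + b then u (take a w) * z (drop a w) - z (take b w) * u (drop b w) else 0)"
  unfolding lie_bracket_def tmult_hom[OF assms] tmult_hom[OF assms(2,1)] by (simp add: add.commute)

lemma tri:
  assumes "length v0 = q" "\<forall>v\<in>set vs. length v = q" "0 \<in> set v0" "distinct (concat (v0 # vs))"
    "0 \<in> set (take q w)"
  shows "(foldl br (delta v0) (map delta vs) :: nat list \<Rightarrow> 'a::field) w = (if w = concat (v0 # vs) then 1 else 0)"
  using assms(2,4,5)
proof (induct vs arbitrary: w rule: rev_induct)
  case Nil
  then show ?case by (simp add: delta_def)
next
  case (snoc v vs)
  define G :: "nat list \<Rightarrow> 'a" where "G = foldl br (delta v0) (map delta vs)"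
  define a where "a = q + q * length vs"
  have lc: "length (concat (v0 # vs)) = a" using snoc(2) assms(1) length_concat_q[of vs q] by (simp add: a_def)
  have hG: "hom a G" using msupp_hom[OF msupp_LN[of v0 vs]] lc unfolding G_def by simp
  have hv: "hom q (delta v)" using msupp_hom[OF msupp_delta[of v]] snoc(2) by simp
  have lv: "length v = q" using snoc(2) by simp
  have v0: "0 \<notin> set v" using snoc(3) assms(3) by auto
  have d: "distinct (concat (v0 # vs))" using snoc(3) by auto
  have l: "\<forall>v\<in>set vs. length v = q" using snoc(2) by simp
  have IH: "G w' = (if w' = concat (v0 # vs) then 1 else 0)" if "0 \<in> set (take q w')" for w'
    unfolding G_def by (rule snoc(1)[OF l d that])
  have "(foldl br (delta v0) (map delta (vs @ [v])) :: nat list \<Rightarrow> 'a) w = br G (delta v) w"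
    by (simp add: G_def)
  also have "\<dots> = (if w = concat (v0 # vs @ [v]) then 1 else 0)"
  proof (cases "length w = a + q")
    case True
    have aq: "q \<le> a" by (simp add: a_def)
    have t1: "delta v (take q w) = (0::'a)" using snoc(4) v0 unfolding delta_def by auto
    have t2: "G (take a w) = (if take a w = concat (v0 # vs) then 1 else 0)"
      by (rule IH) (use snoc(4) aq in \<open>simp add: min_def\<close>)
    have "(take a w = concat (v0 # vs) \<and> drop a w = v) \<longleftrightarrow> w = concat (v0 # vs) @ v"
      using lc by (metis append_eq_conv_conj)
    then show ?thesis
      unfolding br_hom_eval[OF hG hv] using True t1 t2 by (auto simp: delta_def)
  next
    case False
    then show ?thesis unfolding br_hom_eval[OF hG hv] using lc lv by auto
  qed
  finally show ?case .
qed

fun chunks :: "nat \<Rightarrow> nat \<Rightarrow> 'b list \<Rightarrow> 'b list list" where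
  "chunks q 0 w = []"
| "chunks q (Suc k) w = take q w # chunks q k (drop q w)"

lemma concat_chunks: "length w = q * k \<Longrightarrow> concat (chunks q k w) = w"
  by (induct k arbitrary: w) auto

lemma length_chunks: "length w = q * k \<Longrightarrow> v \<in> set (chunks q k w) \<Longrightarrow> length v = q"
proof (induct k arbitrary: w)
  case (Suc k)
  then show ?case using Suc(1)[of "drop q w"] by auto
qed simp

lemma set_chunks: "v \<in> set (chunks q k w) \<Longrightarrow> set v \<subseteq> set w"
  by (induct k arbitrary: w) (auto dest: in_set_takeD in_set_dropD)

lemma chunks_concat: "\<forall>v\<in>set vs. length v = q \<Longrightarrow> chunks q (length vs) (concat vs) = vs"
  by (induct vs) auto


lemma roots_unity_finite:
  assumes "d > 0" shows "finite {c::'a::field. c ^ d = 1}"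
proof -
  let ?p = "monom (1::'a) d - 1"
  have "coeff ?p d = 1" using assms by (simp add: coeff_monom)
  then have "?p \<noteq> 0" by (intro notI) simp
  moreover have eq: "{c::'a. c ^ d = 1} = {c. poly ?p c = 0}" by (simp add: poly_monom)
  ultimately show ?thesis unfolding eq by (intro poly_roots_finite)
qed

lemma good_elem:
  assumes "infinite (UNIV :: 'a set)"
  obtains c :: "'a::field" where "c \<noteq> 0" "\<And>a b. a \<le> m \<Longrightarrow> b \<le> m \<Longrightarrow> c ^ a = c ^ b \<Longrightarrow> a = b"
proof -
  have "finite ({0} \<union> (\<Union>d\<in>{1..m}. {c::'a. c ^ d = 1}))"
    by (auto intro!: roots_unity_finite)
  then obtain c where c: "c \<notin> {0} \<union> (\<Union>d\<in>{1..m}. {c::'a. c ^ d = 1})"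
    using ex_new_if_finite[OF assms] by blast
  have lt: "a = b" if "a \<le> m" "b \<le> m" "c ^ a = c ^ b" "a \<le> b" for a b
  proof (rule ccontr)
    assume "a \<noteq> b"
    then have "b - a \<in> {1..m}" using that by auto
    then have "c ^ (b - a) \<noteq> 1" using c by auto
    moreover have "c ^ b = c ^ a * c ^ (b - a)" using that(4) by (simp add: power_add[symmetric])
    ultimately show False using that(3) c by auto
  qed
  show ?thesis
  proof (rule that)
    show "c \<noteq> 0" using c by auto
    fix a b assume "a \<le> m" "b \<le> m" "c ^ a = c ^ b"
    then show "a = b" using lt[of a b] lt[of b a] by (cases "a \<le> b") auto
  qed
qed

lemma prod_list_single: "prod_list (map (\<lambda>i. if i = j then c else 1) w) = c ^ count (mset w) j"
  by (induct w) auto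

lemma weight_supp:
  fixes u :: "nat list \<Rightarrow> 'a::field"
  assumes inf: "infinite (UNIV :: 'a set)" and mn: "m \<le> n" and ts: "u \<in> tensor_space n m"
    and wt: "\<forall>t. (\<forall>i<n. t i \<noteq> 0) \<longrightarrow> act_diag t u = (\<lambda>w. (\<Prod>i<n. t i ^ omega m i) * u w)"
    and uw: "u w \<noteq> 0"
  shows "mset w = mset [0..<m]"
proof -
  have lw: "length w = m" and sw: "set w \<subseteq> {..<n}" using ts uw unfolding tensor_space_def by auto
  obtain c :: 'a where c0: "c \<noteq> 0" and ci: "\<And>a b. a \<le> m \<Longrightarrow> b \<le> m \<Longrightarrow> c ^ a = c ^ b \<Longrightarrow> a = b"
    using good_elem[OF inf] by blast
  show ?thesis
  proof (rule multiset_eqI)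
    fix j
    show "count (mset w) j = count (mset [0..<m]) j"
    proof (cases "j < n")
      case False
      then have "j \<notin> set w" using sw by auto
      then show ?thesis using False mn by (simp add: count_mset_0_iff)
    next
      case True
      define t where "t = (\<lambda>i. if i = j then c else 1)"
      have tnz: "\<forall>i<n. t i \<noteq> 0" using c0 by (auto simp: t_def)
      have "act_diag t u = (\<lambda>w. (\<Prod>i<n. t i ^ omega m i) * u w)"
        using wt tnz by blast
      then have "act_diag t u w = (\<Prod>i<n. t i ^ omega m i) * u w" by simp
      then have "prod_list (map t w) = (\<Prod>i<n. t i ^ omega m i)"
        using uw unfolding act_diag_def by auto
      also have "(\<Prod>i<n. t i ^ omega m i) = (\<Prod>i<n. if i = j then c ^ omega m j else 1)"
        by (rule prod.cong) (auto simp: t_def)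
      also have "\<dots> = c ^ omega m j" using True by (simp add: prod.delta')
      finally have "c ^ count (mset w) j = c ^ omega m j"
        unfolding t_def prod_list_single .
      moreover have "count (mset w) j \<le> m" using lw count_le_size[of "mset w" j] by simp
      moreover have "omega m j \<le> m" unfolding omega_def by auto
      ultimately have "count (mset w) j = omega m j" by (intro ci)
      then show ?thesis unfolding omega_def by simp
    qed
  qed
qed

lemma weight_of_msupp:
  fixes u :: "nat list \<Rightarrow> 'a::field"
  assumes "msupp (mset [0..<m]) u" "m \<le> n"
  shows "act_diag t u = (\<lambda>w. (\<Prod>i<n. t i ^ omega m i) * u w)"
proof (rule ext)
  fix w
  have P: "(\<Prod>i<n. t i ^ omega m i) = (\<Prod>i<m. t i)"
  proof -
    have "(\<Prod>i<n. t i ^ omega m i) = (\<Prod>i<n. if i < m then t i else 1)"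
      by (rule prod.cong) (auto simp: omega_def)
    also have "\<dots> = prod t {i \<in> {..<n}. i < m}" by (rule prod.inter_filter[symmetric]) simp
    also have "{i \<in> {..<n}. i < m} = {..<m}" using assms(2) by auto
    finally show ?thesis .
  qed
  show "act_diag t u w = (\<Prod>i<n. t i ^ omega m i) * u w"
  proof (cases "u w = 0")
    case False
    then have "mset w = mset [0..<m]" using assms(1) unfolding msupp_def by auto
    then have "prod_mset (mset (map t w)) = prod_mset (mset (map t [0..<m]))"
      by simp
    then have "prod_list (map t w) = prod_list (map t [0..<m])"
      by (simp only: prod_mset_prod_list)
    also have "\<dots> = (\<Prod>i<m. t i)"
      using prod.distinct_set_conv_list[of "[0..<m]" t] by (simp add: atLeast0LessThan)
    finally show ?thesis unfolding act_diag_def P by simp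
  qed (simp add: act_diag_def)
qed


lemma Om_iff: "mset w = mset [0..<m] \<longleftrightarrow> distinct w \<and> set w = {..<m}"
proof
  assume h: "mset w = mset [0..<m]"
  show "distinct w \<and> set w = {..<m}"
    using mset_eq_imp_distinct_iff[OF h] mset_eq_setD[OF h] by (auto simp: atLeast0LessThan)
next
  assume "distinct w \<and> set w = {..<m}"
  then show "mset w = mset [0..<m]"
    using set_eq_iff_mset_eq_distinct[of w "[0..<m]"] by (auto simp: atLeast0LessThan)
qed

lemma card_Om0:
  assumes q: "0 < q" "q \<le> m"
  shows "card {w. mset w = mset [0..<m] \<and> 0 \<in> set (take q w)} = q * fact (m - 1)"
proof -
  define D where "D = {..<q} \<times> permutations_of_set {1..<m}"
  define g where "g = (\<lambda>(i::nat, xs::nat list). take i xs @ 0 # drop i xs)"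
  let ?O = "{w. mset w = mset [0..<m] \<and> 0 \<in> set (take q w)}"
  have lenP: "length xs = m - 1" if "xs \<in> permutations_of_set {1..<m}" for xs
    using that distinct_card[of xs] unfolding permutations_of_set_def by auto
  have "bij_betw g D ?O"
    unfolding bij_betw_def
  proof (intro conjI)
    show "inj_on g D"
    proof (rule inj_onI)
      fix a b assume a: "a \<in> D" and b: "b \<in> D" and e: "g a = g b"
      obtain i xs where ai: "a = (i, xs)" by (cases a)
      obtain j ys where bj: "b = (j, ys)" by (cases b)
      have x: "xs \<in> permutations_of_set {1..<m}" "i < q" using a ai D_def by auto
      have y: "ys \<in> permutations_of_set {1..<m}" "j < q" using b bj D_def by auto
      have n0: "0 \<notin> set (take i xs)" "0 \<notin> set (drop i xs)" "0 \<notin> set (take j ys)" "0 \<notin> set (drop j ys)"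
        using x y unfolding permutations_of_set_def by (auto dest: in_set_takeD in_set_dropD)
      have "take i xs = take j ys \<and> drop i xs = drop j ys"
        using e append_Cons_eq_iff[OF n0(1,2), of "take j ys" "drop j ys"] unfolding ai bj g_def by simp
      moreover then have "xs = ys" by (metis append_take_drop_id)
      moreover have "length xs = m - 1" "length ys = m - 1" using lenP x y by auto
      ultimately have "i = j"
      proof -
        have "i < m" "j < m" using x y q by auto
        then have "length (take i xs) = i" "length (take j ys) = j"
          using \<open>length xs = m - 1\<close> \<open>length ys = m - 1\<close> by auto
        then show "i = j" using \<open>take i xs = take j ys \<and> drop i xs = drop j ys\<close> by metis
      qed
      then show "a = b" using \<open>xs = ys\<close> ai bj by simp
    qed
  next
    show "g ` D = ?O"
    proof (intro equalityI subsetI)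
      fix w assume "w \<in> g ` D"
      then obtain i xs where ix: "i < q" "xs \<in> permutations_of_set {1..<m}" and w: "w = take i xs @ 0 # drop i xs"
        unfolding D_def g_def by auto
      have lx: "length xs = m - 1" using lenP ix by auto
      have dx: "distinct xs" "set xs = {1..<m}" using ix unfolding permutations_of_set_def by auto
      have "distinct w"
      proof -
        have x0: "0 \<notin> set xs" using dx by auto
        then have "0 \<notin> set (take i xs)" "0 \<notin> set (drop i xs)" by (auto dest: in_set_takeD in_set_dropD)
        then show ?thesis unfolding w using dx(1) set_take_disj_set_drop_if_distinct[of xs i i]
          by (simp add: distinct_take distinct_drop)
      qed
      moreover have "set w = {..<m}"
      proof -
        have "set (take i xs) \<union> set (drop i xs) = set xs"
          by (metis set_append append_take_drop_id)
        then have "set w = insert 0 (set xs)" unfolding w by auto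
        also have "\<dots> = insert 0 {1..<m}" using dx by simp
        also have "\<dots> = {..<m}" using q by auto
        finally show ?thesis .
      qed
      moreover have "0 \<in> set (take q w)"
      proof -
        have "length (take i xs) = i" using lx ix q by auto
        then have "take q w = take i xs @ take (q - i) (0 # drop i xs)" unfolding w using ix(1) by (simp add: min_def)
        moreover have "take (q - i) (0 # drop i xs) = 0 # take (q - i - 1) (drop i xs)"
          using ix by (cases "q - i") auto
        ultimately show ?thesis by simp
      qed
      ultimately show "w \<in> ?O" using Om_iff by blast
    next
      fix w assume "w \<in> ?O"
      then have dw: "distinct w" "set w = {..<m}" and w0: "0 \<in> set (take q w)"
        using Om_iff[of w m] by simp_all
      then have "0 \<in> set w" by (auto dest: in_set_takeD)
      then obtain ys zs where w: "w = ys @ 0 # zs" and y0: "0 \<notin> set ys"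
        using split_list_first[of 0 w] by blast
      have "length ys < q"
      proof (rule ccontr)
        assume "\<not> length ys < q"
        then have "take q w = take q ys" unfolding w by simp
        then show False using w0 y0 by (auto dest: in_set_takeD)
      qed
      moreover have "ys @ zs \<in> permutations_of_set {1..<m}"
      proof -
        have z0: "0 \<notin> set zs" using dw(1) unfolding w by simp
        have dyz: "distinct (ys @ zs)" using dw(1) unfolding w by simp
        have s1: "set (ys @ zs) = set w - {0}" unfolding w using y0 z0 by auto
        have s2: "{..<m} - {0} = {1..<m}" by auto
        show ?thesis unfolding permutations_of_set_def using dyz s1 s2 dw(2) by simp
      qed
      moreover have "g (length ys, ys @ zs) = w" unfolding g_def w by simp
      ultimately show "w \<in> g ` D" unfolding D_def by (intro image_eqI[of _ _ "(length ys, ys @ zs)"]) simp_all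
    qed
  qed
  then have "card ?O = card D" by (simp add: bij_betw_same_card)
  also have "card D = q * fact (m - 1)" unfolding D_def by (simp add: card_cartesian_product)
  finally show ?thesis .
qed


definition Om0 :: "nat \<Rightarrow> nat \<Rightarrow> nat list set" where
  "Om0 m q = {w. mset w = mset [0..<m] \<and> 0 \<in> set (take q w)}"

definition bw :: "nat \<Rightarrow> nat \<Rightarrow> nat list \<Rightarrow> nat list \<Rightarrow> 'a::field" where
  "bw q k w = foldl br (delta (take q w)) (map delta (chunks q (k - 1) (drop q w)))"

lemma Om0_facts:
  assumes w: "w \<in> Om0 (q * k) q" and q: "0 < q" and k: "0 < k"
  shows "length w = q * k" "distinct w" "set w = {..<q * k}" "length (take q w) = q"
    "concat (take q w # chunks q (k - 1) (drop q w)) = w"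
    "\<forall>v\<in>set (chunks q (k - 1) (drop q w)). length v = q"
    "0 \<in> set (take q w)"
proof -
  have m: "mset w = mset [0..<q * k]" and z: "0 \<in> set (take q w)" using w unfolding Om0_def by auto
  show d: "distinct w" "set w = {..<q * k}" using m Om_iff by blast+
  show lw: "length w = q * k" using m by (metis length_upt minus_nat.diff_0 size_mset)
  have qk: "q \<le> q * k" using k by simp
  show "length (take q w) = q" using lw qk by simp
  have ld: "length (drop q w) = q * (k - 1)" using lw by (simp add: diff_mult_distrib2)
  show "concat (take q w # chunks q (k - 1) (drop q w)) = w" using concat_chunks[OF ld] by simp
  show "\<forall>v\<in>set (chunks q (k - 1) (drop q w)). length v = q" using length_chunks[OF ld] by blast
  show "0 \<in> set (take q w)" by (rule z)
qed

lemma bw_eval: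
  assumes w: "w \<in> Om0 (q * k) q" and q: "0 < q" and k: "0 < k" and w': "0 \<in> set (take q w')"
  shows "(bw q k w :: nat list \<Rightarrow> 'a::field) w' = (if w' = w then 1 else 0)"
proof -
  note F = Om0_facts[OF w q k]
  have "(bw q k w :: nat list \<Rightarrow> 'a) w' = (if w' = concat (take q w # chunks q (k - 1) (drop q w)) then 1 else 0)"
    unfolding bw_def by (rule tri) (use F w' in simp_all)
  then show ?thesis using F(5) by simp
qed

lemma LN_lie_gen:
  assumes "x \<in> lie_gen n q" "set us \<subseteq> Wd n q"
  shows "foldl br x (map delta us) \<in> lie_gen n q"
  using assms
proof (induct us arbitrary: x)
  case (Cons u us)
  have "delta u \<in> lie_gen n q"
    using Cons(3) by (intro lie_gen.gen) (auto simp: tensor_space_def Wd_def delta_def)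
  then have "br x (delta u) \<in> lie_gen n q" using Cons(2) lie_gen.brk by blast
  then show ?case using Cons by simp
qed simp

lemma inj_delta: "inj (delta :: nat list \<Rightarrow> nat list \<Rightarrow> 'a::field)"
proof (rule injI)
  fix x y assume "(delta x :: nat list \<Rightarrow> 'a) = delta y"
  then have "(delta x :: nat list \<Rightarrow> 'a) x = delta y x" by simp
  then show "x = y" unfolding delta_def by (auto split: if_splits)
qed

lemma inv_delta_mset: "image_mset (inv (delta :: nat list \<Rightarrow> nat list \<Rightarrow> 'a::field)) (image_mset delta X) = X"
  by (induct X) (simp_all add: inv_f_f[OF inj_delta])

lemma mset_concat: "mset (concat xs) = sum_mset (image_mset mset (mset xs))"
  by (induct xs) auto


lemma B_indep:
  assumes q: "0 < q" and k: "0 < k"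
  shows "\<not> V.dependent ((bw q k :: nat list \<Rightarrow> nat list \<Rightarrow> 'a::field) ` Om0 (q * k) q)"
proof
  let ?B = "(bw q k :: nat list \<Rightarrow> nat list \<Rightarrow> 'a) ` Om0 (q * k) q"
  assume "V.dependent ?B"
  then obtain t u v where t: "finite t" "t \<subseteq> ?B" and s: "(\<Sum>v\<in>t. (\<lambda>w. u v * v w)) = 0"
    and v: "v \<in> t" "u v \<noteq> 0"
    unfolding V.dependent_explicit by blast
  obtain w0 where w0: "w0 \<in> Om0 (q * k) q" "v = bw q k w0" using t v by blast
  have z0: "0 \<in> set (take q w0)" using w0 unfolding Om0_def by auto
  have ev: "b w0 = (if b = v then 1 else 0)" if bt: "b \<in> t" for b
  proof -
    obtain w1 where w1: "w1 \<in> Om0 (q * k) q" "b = bw q k w1" using bt t by blast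
    have "b w0 = (if w0 = w1 then 1 else 0)" using bw_eval[where 'a='a, OF w1(1) q k z0] w1 by simp
    moreover have "w0 = w1 \<longleftrightarrow> b = v"
    proof
      assume "b = v"
      have z1: "0 \<in> set (take q w1)" using w1 unfolding Om0_def by auto
      have "(bw q k w0 :: nat list \<Rightarrow> 'a) w1 = bw q k w1 w1" using \<open>b = v\<close> w0 w1 by simp
      then show "w0 = w1" using bw_eval[where 'a='a, OF w0(1) q k z1] bw_eval[where 'a='a, OF w1(1) q k z1] by (auto split: if_splits)
    qed (use w0 w1 in simp)
    ultimately show ?thesis by simp
  qed
  have "0 = (\<Sum>b\<in>t. (\<lambda>w. u b * b w)) w0" using s by simp
  also have "\<dots> = (\<Sum>b\<in>t. u b * b w0)" by (simp add: sum_fun_apply)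
  also have "\<dots> = (\<Sum>b\<in>t. if b = v then u b else 0)" by (rule sum.cong) (auto simp: ev)
  also have "\<dots> = u v" using t v by (simp add: sum.delta')
  finally show False using v by simp
qed

lemma B_inj:
  assumes q: "0 < q" and k: "0 < k"
  shows "inj_on (bw q k :: nat list \<Rightarrow> nat list \<Rightarrow> 'a::field) (Om0 (q * k) q)"
proof (rule inj_onI)
  fix w0 w1 assume w: "w0 \<in> Om0 (q * k) q" "w1 \<in> Om0 (q * k) q"
    and e: "(bw q k w0 :: nat list \<Rightarrow> 'a) = bw q k w1"
  have z1: "0 \<in> set (take q w1)" using w unfolding Om0_def by auto
  have "(bw q k w0 :: nat list \<Rightarrow> 'a) w1 = bw q k w1 w1" using e by simp
  then show "w0 = w1" using bw_eval[where 'a='a, OF w(1) q k z1] bw_eval[where 'a='a, OF w(2) q k z1] by (auto split: if_splits)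
qed


lemma B_sub:
  assumes q: "0 < q" and k: "0 < k" and mn: "q * k \<le> n" and w: "w \<in> Om0 (q * k) q"
  shows "(bw q k w :: nat list \<Rightarrow> 'a::field) \<in> schur_functor n (q * k) (lie_power n q k)"
proof -
  note F = Om0_facts[OF w q k]
  let ?v0 = "take q w" and ?vs = "chunks q (k - 1) (drop q w)"
  have sw: "set w \<subseteq> {..<n}" using F(3) mn by auto
  have v0: "?v0 \<in> Wd n q" using F(4) sw unfolding Wd_def by (auto dest: in_set_takeD)
  have vs: "set ?vs \<subseteq> Wd n q"
  proof
    fix v assume v: "v \<in> set ?vs"
    have "set v \<subseteq> set (drop q w)" by (rule set_chunks[OF v])
    then have "set v \<subseteq> {..<n}" using sw by (auto dest: in_set_dropD)
    then show "v \<in> Wd n q" using F(6) v unfolding Wd_def by auto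
  qed
  have d0: "(delta ?v0 :: nat list \<Rightarrow> 'a) \<in> lie_gen n q"
    using v0 by (intro lie_gen.gen) (auto simp: tensor_space_def Wd_def delta_def)
  have lg: "(bw q k w :: nat list \<Rightarrow> 'a) \<in> lie_gen n q"
    unfolding bw_def by (rule LN_lie_gen[OF d0 vs])
  have ms: "msupp (mset [0..<q * k]) (bw q k w :: nat list \<Rightarrow> 'a)"
  proof -
    have e: "mset (concat (?v0 # ?vs)) = mset [0..<q * k]"
      by (subst F(5)) (use w in \<open>simp add: Om0_def\<close>)
    show ?thesis using msupp_LN[of ?v0 ?vs] unfolding bw_def e .
  qed
  have ts: "(bw q k w :: nat list \<Rightarrow> 'a) \<in> tensor_space n (q * k)"
    unfolding tensor_space_def
  proof (intro CollectI allI impI)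
    fix w' assume "(bw q k w :: nat list \<Rightarrow> 'a) w' \<noteq> 0"
    then have m: "mset w' = mset [0..<q * k]" using ms unfolding msupp_def by blast
    then have "length w' = q * k" by (metis length_upt minus_nat.diff_0 size_mset)
    moreover have "set w' \<subseteq> {..<n}" using m Om_iff[of w' "q * k"] mn by auto
    ultimately show "length w' = q * k \<and> set w' \<subseteq> {..<n}" by simp
  qed
  show ?thesis
    unfolding schur_functor_def weight_space_def lie_power_def
    using lg ts weight_of_msupp[OF ms mn] by blast
qed

lemma S_span:
  assumes inf: "infinite (UNIV :: 'a::field set)"
    and q: "0 < q" and k: "0 < k" and mn: "q * k \<le> n"
    and u: "(u :: nat list \<Rightarrow> 'a) \<in> schur_functor n (q * k) (lie_power n q k)"
  shows "u \<in> V.span (bw q k ` Om0 (q * k) q)"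
proof -
  let ?m = "q * k"
  let ?B = "(bw q k :: nat list \<Rightarrow> nat list \<Rightarrow> 'a) ` Om0 (q * k) q"
  define P :: "(nat list \<Rightarrow> 'a) \<Rightarrow> (nat list \<Rightarrow> 'a)" where
    "P f = (\<lambda>w. if mset w = mset [0..<?m] then f w else 0)" for f
  have ulg: "u \<in> lie_gen n q" and uts: "u \<in> tensor_space n ?m"
    and uwt: "\<forall>t. (\<forall>i<n. t i \<noteq> 0) \<longrightarrow> act_diag t u = (\<lambda>w. (\<Prod>i<n. t i ^ omega ?m i) * u w)"
    using u unfolding schur_functor_def weight_space_def lie_power_def by auto
  have Pu: "P u = u"
  proof
    fix w show "P u w = u w"
      using weight_supp[OF inf mn uts uwt, of w] unfolding P_def by auto
  qed
  have img: "P L \<in> V.span ?B" if L: "L \<in> LN n q" for L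
  proof -
    obtain v us where L: "L = foldl br (delta v) (map delta us)" and v: "v \<in> Wd n q"
      and us: "set us \<subseteq> Wd n q"
      using L unfolding LN_def by blast
    define M where "M = mset (concat (v # us))"
    have ms: "msupp M L" unfolding L M_def by (rule msupp_LN)
    show ?thesis
    proof (cases "M = mset [0..<?m]")
      case False
      have "P L = 0"
      proof
        fix w show "P L w = 0 w"
          using ms False unfolding P_def msupp_def by auto
      qed
      then show ?thesis by (simp add: V.span_zero)
    next
      case True
      have PL: "P L = L"
      proof
        fix w show "P L w = L w"
          using ms True unfolding P_def msupp_def by auto
      qed
      have allq: "\<forall>x\<in>set (v # us). length x = q" using v us unfolding Wd_def by auto
      have "0 \<in> set (concat (v # us))"
        using True q k unfolding M_def by (metis Om_iff lessThan_iff mult_pos_pos)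
      then obtain v0 where v0: "v0 \<in> set (v # us)" "0 \<in> set v0" by auto
      let ?Lt = "map (delta :: nat list \<Rightarrow> nat list \<Rightarrow> 'a) (v # us)"
      have Lhd: "L = foldl br (hd ?Lt) (tl ?Lt)" unfolding L by simp
      have LS: "L \<in> V.span {foldl br (delta v0) \<pi> | \<pi>. mset (delta v0 # \<pi>) = mset ?Lt}"
        unfolding Lhd by (rule lnR) (use v0 H_delta in auto)
      have XB: "{foldl br (delta v0) \<pi> | \<pi>. mset (delta v0 # \<pi>) = mset ?Lt} \<subseteq> ?B"
      proof (rule subsetI)
        fix x assume "x \<in> {foldl br (delta v0) \<pi> | \<pi>. mset (delta v0 # \<pi>) = mset ?Lt}"
        then obtain \<pi> where xe: "x = foldl br (delta v0) \<pi>" and pm: "mset (delta v0 # \<pi>) = mset ?Lt"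
          by blast
        have "set \<pi> \<subseteq> set ?Lt" using mset_eq_setD[OF pm] by auto
        then have sp: "set \<pi> \<subseteq> range delta" by auto
        define ps where "ps = map (inv delta) \<pi>"
        have mps: "map delta ps = \<pi>"
          unfolding ps_def map_map by (rule map_idI) (use sp in \<open>auto simp: f_inv_into_f\<close>)
        have "image_mset delta (mset (v0 # ps)) = image_mset (delta :: nat list \<Rightarrow> nat list \<Rightarrow> 'a) (mset (v # us))"
          using pm mps by (metis mset_map list.simps(9))
        then have mvs: "mset (v0 # ps) = mset (v # us)"
          by (metis inv_delta_mset)
        define w' where "w' = concat (v0 # ps)"
        have allq': "\<forall>x\<in>set (v0 # ps). length x = q" using allq mset_eq_setD[OF mvs] by auto
        have mw': "mset w' = mset [0..<?m]"
          unfolding w'_def mset_concat mvs using True unfolding M_def mset_concat by simp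
        have lv0: "length v0 = q" using allq' by simp
        have tw: "take q w' = v0" "drop q w' = concat ps" unfolding w'_def using lv0 by auto
        have "length (concat (v # us)) = ?m"
          using True unfolding M_def by (metis length_upt minus_nat.diff_0 size_mset)
        then have "q * length (v # us) = q * k" using length_concat_q[OF allq] by simp
        then have "length (v # us) = k" using mult_left_cancel[of q "length (v # us)" k] q by blast
        moreover have "length (v0 # ps) = length (v # us)"
        proof -
          have "size (mset (v0 # ps)) = size (mset (v # us))" using mvs by simp
          then show ?thesis by (simp only: size_mset)
        qed
        ultimately have lps: "length ps = k - 1" by simp
        have w'O: "w' \<in> Om0 ?m q" unfolding Om0_def using mw' tw v0(2) by simp
        have "(bw q k w' :: nat list \<Rightarrow> 'a) = foldl br (delta v0) (map delta ps)"
          unfolding bw_def tw lps[symmetric] using chunks_concat[of ps q] allq' by simp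
        then have "foldl br (delta v0) \<pi> = (bw q k w' :: nat list \<Rightarrow> 'a)" using mps by simp
        then show "x \<in> ?B" using w'O xe by simp
      qed
      have "L \<in> V.span ?B" using V.span_mono[OF XB] LS by (rule subsetD)
      then show ?thesis using PL by simp
    qed
  qed
  have "P u \<in> V.span ?B"
  proof (rule span_lin[of P, OF _ _ img lie_gen_span[OF ulg]])
    fix x y show "P (x + y) = P x + P y" unfolding P_def by (auto simp: fun_eq_iff)
  next
    fix c x show "P (\<lambda>w. c * x w) = (\<lambda>w. c * P x w)" unfolding P_def by (auto simp: fun_eq_iff)
  qed
  then show ?thesis using Pu by simp
qed


theorem lemma3p3:
  fixes p q k n :: nat
  assumes "prime p"
    and "CHAR('a::field) = p"
    and "infinite (UNIV :: 'a set)"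
    and "q > 0" and "k > 0" and "n \<ge> q * k"
  shows "tdim (schur_functor n (q * k) (lie_power n q k :: (nat list \<Rightarrow> 'a) set))
           = fact (q * k) div k"
proof -
  let ?S = "schur_functor n (q * k) (lie_power n q k :: (nat list \<Rightarrow> 'a) set)"
  let ?B = "(bw q k :: nat list \<Rightarrow> nat list \<Rightarrow> 'a) ` Om0 (q * k) q"
  have q: "0 < q" and k: "0 < k" and mn: "q * k \<le> n" using assms by auto
  have "card ?B = V.dim ?S"
  proof (rule V.basis_card_eq_dim)
    show "?B \<subseteq> ?S" using B_sub[OF q k mn] by blast
    show "?S \<subseteq> V.span ?B" using S_span[OF assms(3) q k mn] by blast
    show "\<not> V.dependent ?B" by (rule B_indep[OF q k])
  qed
  moreover have "card ?B = card (Om0 (q * k) q)" by (rule card_image[OF B_inj[OF q k]])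
  moreover have "card (Om0 (q * k) q) = q * fact (q * k - 1)"
    unfolding Om0_def by (rule card_Om0) (use q k in auto)
  moreover have "fact (q * k) div k = q * fact (q * k - 1)"
  proof -
    have "fact (q * k) = (q * k) * (fact (q * k - 1) :: nat)"
      using q k by (simp add: fact_reduce)
    then have "fact (q * k) = k * (q * fact (q * k - 1) :: nat)" by simp
    then show ?thesis using k by simp
  qed
  ultimately show ?thesis unfolding tdim_def by simp
qed

end
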